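(* Let $X, Y, Z$ be Polish spaces and let $P: X \rightsquigarrow Y$ be a tight Feller kernel such that each $P(x,\cdot)$ has a continuous density $\rho_x$ with respect to a fixed reference Borel measure on $Y$. Let $R \subseteq X \times Z$ and $S \subseteq Y \times Z$ be closed, and define $P^{\dagger,\delta} S = \{(x,z) \in X \times Z : \mathrm{supp}_\delta(P(x)) \subseteq S_z\}$. If $0 < \delta \le \epsilon < 1$, then $$P_!^\epsilon(R \cap P^{\dagger,\delta} S) \subseteq P_!^\epsilon R \cap S.$$
   Context: Feller: $x \mapsto \int\phi\,dP(x,\cdot)$ continuous for bounded continuous $\phi$; tight: for each compact $K \subseteq X$, $\eta>0$ there is compact $L$ with $P(x,L) \ge 1-\eta$ for $x \in K$. $S_z = \{y : (y,z) \in S\}$. The $\epsilon$-highest density region is $\mathrm{supp}_\epsilon(P(x)) = \{y : \rho_x(y) \ge \lambda_\epsilon\}$ with $\lambda_\epsilon = \sup\{\lambda \ge 0 : P(x, \{y : \rho_x(y) \ge \lambda\}) \ge 1-\epsilon\}$. The $\epsilon$-pushforward is $P_!^\epsilon T = \overline{\bigcup_{(x,z) \in T} \mathrm{supp}_\epsilon(P(x)) \times \{z\}}$ (closure in $Y \times Z$). *)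

theory Defs
  imports "HOL-Probability.Probability"
begin

definition feller :: "('x::topological_space \<Rightarrow> 'y::topological_space measure) \<Rightarrow> bool" where
  "feller P \<longleftrightarrow> (\<forall>\<phi> :: 'y \<Rightarrow> real. continuous_on UNIV \<phi> \<and> bounded (range \<phi>) \<longrightarrow>
      continuous_on UNIV (\<lambda>x. integral\<^sup>L (P x) \<phi>))"

definition tight_kernel :: "('x::topological_space \<Rightarrow> 'y::topological_space measure) \<Rightarrow> bool" where
  "tight_kernel P \<longleftrightarrow> (\<forall>K. compact K \<longrightarrow> (\<forall>\<eta>>0. \<exists>L. compact L \<and>
      (\<forall>x\<in>K. measure (P x) L \<ge> 1 - \<eta>)))"

definition hdr_level :: "('x \<Rightarrow> 'y measure) \<Rightarrow> ('x \<Rightarrow> 'y \<Rightarrow> real) \<Rightarrow> real \<Rightarrow> 'x \<Rightarrow> real" where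
  "hdr_level P \<rho> \<epsilon> x = Sup {l. l \<ge> 0 \<and> measure (P x) {y. \<rho> x y \<ge> l} \<ge> 1 - \<epsilon>}"

definition hdr :: "('x \<Rightarrow> 'y measure) \<Rightarrow> ('x \<Rightarrow> 'y \<Rightarrow> real) \<Rightarrow> real \<Rightarrow> 'x \<Rightarrow> 'y set" where
  "hdr P \<rho> \<epsilon> x = {y. \<rho> x y \<ge> hdr_level P \<rho> \<epsilon> x}"

definition pushforward :: "('x \<Rightarrow> 'y measure) \<Rightarrow> ('x \<Rightarrow> 'y \<Rightarrow> real) \<Rightarrow> real \<Rightarrow>
    ('x \<times> 'z) set \<Rightarrow> ('y::topological_space \<times> 'z::topological_space) set" where
  "pushforward P \<rho> \<epsilon> T = closure (\<Union>(x, z)\<in>T. hdr P \<rho> \<epsilon> x \<times> {z})"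

definition dagger :: "('x \<Rightarrow> 'y measure) \<Rightarrow> ('x \<Rightarrow> 'y \<Rightarrow> real) \<Rightarrow> real \<Rightarrow>
    ('y \<times> 'z) set \<Rightarrow> ('x \<times> 'z) set" where
  "dagger P \<rho> \<delta> S = {(x, z). hdr P \<rho> \<delta> x \<subseteq> {y. (y, z) \<in> S}}"

end

theory Submission
  imports Defs
begin

lemma level_bdd:
  fixes M :: "'y::topological_space measure" and f :: "'y \<Rightarrow> real" and e :: real
  assumes "prob_space M" and "sets M = sets borel" and "continuous_on UNIV f" and "e < 1"
  shows "bdd_above {l. l \<ge> 0 \<and> measure M {y. f y \<ge> l} \<ge> 1 - e}"
proof -
  interpret prob_space M by fact
  let ?A = "\<lambda>n::nat. {y. f y \<ge> real n}"
  have meas: "?A n \<in> sets M" for n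
  proof -
    have "closed (?A n)" using assms(3) by (intro closed_Collect_le) (auto intro: continuous_intros)
    then show ?thesis using assms(2) by simp
  qed
  have dec: "decseq ?A" by (auto simp: decseq_def intro: order_trans)
  have "(\<lambda>n. measure M (?A n)) \<longlonglongrightarrow> measure M (\<Inter>n. ?A n)"
    using finite_Lim_measure_decseq[OF _ dec] meas by auto
  moreover have "(\<Inter>n. ?A n) = {}"
  proof -
    { fix y assume "\<forall>n. f y \<ge> real n"
      moreover obtain n where "real n > f y" using reals_Archimedean2 by blast
      ultimately have False by (meson not_le) }
    then show ?thesis by auto
  qed
  ultimately have "(\<lambda>n. measure M (?A n)) \<longlonglongrightarrow> 0" by simp
  moreover have "1 - e > 0" using assms(4) by simp
  ultimately obtain n where n: "measure M (?A n) < 1 - e"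
    using order_tendstoD(2)[of _ 0 sequentially "1 - e"] by (meson eventually_sequentially order.refl)
  show ?thesis unfolding bdd_above_def
  proof (intro exI ballI)
    fix l assume "l \<in> {l. l \<ge> 0 \<and> measure M {y. f y \<ge> l} \<ge> 1 - e}"
    hence l: "measure M {y. f y \<ge> l} \<ge> 1 - e" by simp
    show "l \<le> real n"
    proof (rule ccontr)
      assume "\<not> l \<le> real n"
      hence "{y. f y \<ge> l} \<subseteq> ?A n" by auto
      hence "measure M {y. f y \<ge> l} \<le> measure M (?A n)"
        using meas by (intro finite_measure_mono) auto
      thus False using l n by simp
    qed
  qed
qed

theorem mainTheorem17:
  fixes P :: "'x::polish_space \<Rightarrow> 'y::polish_space measure"
    and \<mu> :: "'y measure"
    and \<rho> :: "'x \<Rightarrow> 'y \<Rightarrow> real"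
    and R :: "('x \<times> 'z::polish_space) set"
    and S :: "('y \<times> 'z) set"
    and \<delta> \<epsilon> :: real
  assumes ref_borel: "sets \<mu> = sets borel"
    and prob: "\<And>x. prob_space (P x)"
    and dens_nonneg: "\<And>x y. \<rho> x y \<ge> 0"
    and dens_cont: "\<And>x. continuous_on UNIV (\<rho> x)"
    and dens: "\<And>x. P x = density \<mu> (\<lambda>y. ennreal (\<rho> x y))"
    and feller: "feller P"
    and tight: "tight_kernel P"
    and R_closed: "closed R"
    and S_closed: "closed S"
    and \<delta>_pos: "0 < \<delta>" and \<delta>_le: "\<delta> \<le> \<epsilon>" and \<epsilon>_lt: "\<epsilon> < 1"
  shows "pushforward P \<rho> \<epsilon> (R \<inter> dagger P \<rho> \<delta> S) \<subseteq> pushforward P \<rho> \<epsilon> R \<inter> S"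
proof -
  have setsP: "sets (P x) = sets borel" for x using dens[of x] ref_borel by simp
  have sub: "hdr P \<rho> \<epsilon> x \<subseteq> hdr P \<rho> \<delta> x" for x
  proof -
    interpret prob_space "P x" by (rule prob)
    have "hdr_level P \<rho> \<delta> x \<le> hdr_level P \<rho> \<epsilon> x"
      unfolding hdr_level_def
    proof (rule cSup_subset_mono)
      have "space (P x) = UNIV" using sets_eq_imp_space_eq[OF setsP[of x]] by simp
      hence "{y. \<rho> x y \<ge> 0} = space (P x)" using dens_nonneg by auto
      hence "measure (P x) {y. \<rho> x y \<ge> 0} = 1" using prob_space by simp
      then show "{l. l \<ge> 0 \<and> measure (P x) {y. \<rho> x y \<ge> l} \<ge> 1 - \<delta>} \<noteq> {}"
        proof -
          assume h: "measure (P x) {y. \<rho> x y \<ge> 0} = 1"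
          have "(0::real) \<in> {l. l \<ge> 0 \<and> measure (P x) {y. \<rho> x y \<ge> l} \<ge> 1 - \<delta>}"
            using h \<delta>_pos by simp
          thus ?thesis by blast
        qed
      show "bdd_above {l. l \<ge> 0 \<and> measure (P x) {y. \<rho> x y \<ge> l} \<ge> 1 - \<epsilon>}"
        by (rule level_bdd[OF prob setsP dens_cont \<epsilon>_lt])
      show "{l. l \<ge> 0 \<and> measure (P x) {y. \<rho> x y \<ge> l} \<ge> 1 - \<delta>}
          \<subseteq> {l. l \<ge> 0 \<and> measure (P x) {y. \<rho> x y \<ge> l} \<ge> 1 - \<epsilon>}"
        using \<delta>_le by auto
    qed
    thus ?thesis unfolding hdr_def by auto
  qed
  have "pushforward P \<rho> \<epsilon> (R \<inter> dagger P \<rho> \<delta> S) \<subseteq> pushforward P \<rho> \<epsilon> R"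
    unfolding pushforward_def by (intro closure_mono) blast
  moreover have "pushforward P \<rho> \<epsilon> (R \<inter> dagger P \<rho> \<delta> S) \<subseteq> S"
    unfolding pushforward_def
  proof (rule closure_minimal[OF _ S_closed])
    show "(\<Union>(x, z)\<in>R \<inter> dagger P \<rho> \<delta> S. hdr P \<rho> \<epsilon> x \<times> {z}) \<subseteq> S"
      using sub unfolding dagger_def by fastforce
  qed
  ultimately show ?thesis by blast
qed

end
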